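(* Let $(a_k)_{k\geqslant1}$ be a sequence of complex numbers and $S(x)=\sum_{k\leqslant x}a_k\left[\frac{x}{k}\right]\log k$. Suppose that for every $v>1$, $\lim_{k\to\infty}|S(k)|/k^{v}=0$, so that $g(s)=\sum_{m=1}^\infty a_m m^{-s}$ converges for all real $s>1$. Then for every integer $n\geqslant 2$, with $\sigma=1+\frac{1}{\log n}$, \[ \sum_{m=1}^n a_m\left[\frac{n}{m}\right]-n\,g\Bigl(1+\frac{1}{\log n}\Bigr)-\frac{S(n)}{\log n} =\sum_{k=2}^{n-1}S(k)\int_0^\infty\Bigl(\frac{F_t(\frac{n}{k})}{k^t}-\frac{F_t(\frac{n}{k+1})}{(k+1)^t}\Bigr)dt - n\sum_{k=2}^\infty S(k)\int_\sigma^\infty\Bigl(\frac{1}{k^u}-\frac{1}{(k+1)^u}\Bigr)\frac{du}{\zeta(u)}, \] where an empty sum $\sum_{k=2}^{1}$ is taken to be $0$.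
   Context: $[x]$ denotes the integer part of $x$; $\zeta$ is the Riemann zeta function; $\mu$ is the Möbius function. For $t>0$, $f_t(m)=\sum_{d\mid m}\mu(d)d^{-t}=\prod_{p\mid m}(1-p^{-t})$ (product over primes dividing $m$), and $F_t(x)=\sum_{1\leqslant m\leqslant x}f_t(m)$. *)

theory Defs
  imports "HOL-Analysis.Analysis" "HOL-Computational_Algebra.Computational_Algebra"
begin

definition mobius :: "nat \<Rightarrow> real" where
  "mobius d = (if d = 0 then 0 else if squarefree d then (-1) ^ card (prime_factors d) else 0)"

(* Riemann zeta function on reals u > 1 (the only range where it is used) *)
definition zeta_real :: "real \<Rightarrow> real" where
  "zeta_real u = (\<Sum>m. 1 / real (m + 1) powr u)"

definition f_t :: "real \<Rightarrow> nat \<Rightarrow> real" where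
  "f_t t m = (\<Sum>d | d dvd m. mobius d * real d powr (- t))"

definition F_t :: "real \<Rightarrow> real \<Rightarrow> real" where
  "F_t t x = (\<Sum>m\<in>{1..nat \<lfloor>x\<rfloor>}. f_t t m)"

(* S(x) = sum_{k <= x} a_k [x/k] log k  (a indexed from 1; a 0 is irrelevant) *)
definition S_fun :: "(nat \<Rightarrow> complex) \<Rightarrow> real \<Rightarrow> complex" where
  "S_fun a x = (\<Sum>k\<in>{1..nat \<lfloor>x\<rfloor>}. a k * of_int \<lfloor>x / real k\<rfloor> * of_real (ln (real k)))"

definition g_fun :: "(nat \<Rightarrow> complex) \<Rightarrow> real \<Rightarrow> complex" where
  "g_fun a s = (\<Sum>m. a (m + 1) * of_real (real (m + 1) powr (- s)))"

end

theory Submission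
  imports Defs
begin


lemma mobius_prime_mult:
  assumes p: "prime p" and d: "d > 0" and nd: "\<not> p dvd d"
  shows "mobius (p * d) = - mobius d"
proof -
  have cop: "coprime p d" using p nd by (simp add: prime_imp_coprime)
  have sq: "squarefree (p*d) \<longleftrightarrow> squarefree d"
    using squarefree_mult_coprime[OF cop squarefree_prime[OF p]] squarefree_multD(2)[of p d] by blast
  have pf: "prime_factors (p*d) = insert p (prime_factors d)"
    using p d by (simp add: prime_factors_product prime_prime_factors)
  have pn: "p \<notin> prime_factors d" using nd by auto
  have "card (prime_factors (p*d)) = Suc (card (prime_factors d))"
    using pf pn by simp
  then show ?thesis using p d sq unfolding mobius_def by (auto simp: prime_gt_0_nat)
qed

lemma mobius_prime_mult_dvd:
  assumes p: "prime p" and pd: "p dvd d"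
  shows "mobius (p * d) = 0"
proof -
  have "\<not> squarefree (p*d)"
  proof
    assume "squarefree (p*d)"
    moreover have "p^2 dvd p*d" using pd by (simp add: power2_eq_square)
    ultimately have "is_unit p" unfolding squarefree_def by blast
    with p show False by simp
  qed
  then show ?thesis unfolding mobius_def by simp
qed

lemma mobius_sum_dvd:
  assumes N: "N > 0"
  shows "(\<Sum>d | d dvd N. mobius d) = (if N = 1 then 1 else 0)"
proof (cases "N = 1")
  case True
  then show ?thesis by (simp add: mobius_def)
next
  case False
  then have "N \<noteq> 1" by simp
  then obtain p where p: "prime p" "p dvd N" using prime_factor_nat by blast
  then obtain q where q: "N = p * q" by (auto elim: dvdE)
  have p0: "p > 0" using p by (simp add: prime_gt_0_nat)
  have q0: "q > 0" using q N by (intro Nat.gr0I) auto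
  define A where "A = {d. d dvd N \<and> \<not> p dvd d}"
  define B where "B = {d. d dvd N \<and> p dvd d}"
  have fin: "finite {d. d dvd N}" using N by simp
  have "{d. d dvd N} = A \<union> B" "A \<inter> B = {}" unfolding A_def B_def by auto
  then have split: "(\<Sum>d | d dvd N. mobius d) = sum mobius A + sum mobius B"
    using fin by (metis (no_types, lifting) finite_Un sum.union_disjoint)
  have Bimg: "B = (\<lambda>e. p * e) ` {e. e dvd q}"
  proof (intro set_eqI iffI)
    fix d assume "d \<in> B"
    then have d1: "p dvd d" "d dvd p * q" unfolding B_def q by auto
    then obtain e where e: "d = p * e" by (auto elim: dvdE)
    then have "e dvd q" using p0 d1 by simp
    then show "d \<in> (\<lambda>e. p * e) ` {e. e dvd q}" using e by auto
  next
    fix d assume "d \<in> (\<lambda>e. p * e) ` {e. e dvd q}"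
    then obtain e where e: "d = p * e" "e dvd q" by auto
    then have "d dvd N" unfolding q by simp
    then show "d \<in> B" using e unfolding B_def by auto
  qed
  have inj: "inj_on (\<lambda>e. p * e) {e. e dvd q}" using p0 by (auto simp: inj_on_def)
  have finC: "finite {e. e dvd q}" using q0 by simp
  have "sum mobius B = (\<Sum>e | e dvd q. mobius (p * e))"
    unfolding Bimg by (simp add: sum.reindex[OF inj] o_def)
  also have "\<dots> = (\<Sum>e | e dvd q. if p dvd e then 0 else - mobius e)"
  proof (rule sum.cong)
    fix e assume "e \<in> {e. e dvd q}"
    show "mobius (p * e) = (if p dvd e then 0 else - mobius e)"
    proof (cases "p dvd e")
      case True then show ?thesis using mobius_prime_mult_dvd[OF p(1)] by simp
    next
      case False
      then have "e > 0" by (intro Nat.gr0I) auto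
      then show ?thesis using mobius_prime_mult[OF p(1) _ False] False by simp
    qed
  qed simp
  also have "\<dots> = (\<Sum>e\<in>{e. e dvd q} \<inter> {e. \<not> p dvd e}. - mobius e)"
    using finC by (simp add: sum.If_cases Collect_neg_eq)
  also have "{e. e dvd q} \<inter> {e. \<not> p dvd e} = A"
  proof (intro set_eqI iffI)
    fix e assume "e \<in> {e. e dvd q} \<inter> {e. \<not> p dvd e}"
    then show "e \<in> A" unfolding A_def q by auto
  next
    fix e assume e: "e \<in> A"
    then have cpe: "coprime p e" using p by (simp add: A_def prime_imp_coprime)
    have "e dvd q" using e coprime_dvd_mult_right_iff[of e p q] cpe unfolding A_def q
      by (simp add: coprime_commute)
    show "e \<in> {e. e dvd q} \<inter> {e. \<not> p dvd e}" using e \<open>e dvd q\<close> unfolding A_def by auto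
  qed
  finally have "sum mobius B = - sum mobius A" by (simp add: sum_negf)
  then show ?thesis using split False by simp
qed



lemma regroup:
  fixes s :: "nat \<Rightarrow> complex" and \<phi> :: "nat \<Rightarrow> real"
  defines "F \<equiv> \<lambda>(k,d,r). of_real (mobius d) * s k * of_real (\<phi> (d*k+r) - \<phi> (d*k+r+1))"
  defines "T \<equiv> Sigma {1..} (\<lambda>k. Sigma {1..} (\<lambda>d. {..<d}))"
  assumes abs: "(\<lambda>x. norm (F x)) summable_on T"
  shows "((\<lambda>m. (\<Sum>d\<in>{1..m}. of_real (mobius d) * s (m div d)) * of_real (\<phi> m - \<phi> (m+1)))
            has_sum infsum F T) {1..}"
    and "((\<lambda>k. \<Sum>\<^sub>\<infinity>d\<in>{1..}. of_real (mobius d) * s k * of_real (\<phi> (d*k) - \<phi> (d*k+d)))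
            has_sum infsum F T) {1..}"
    and "\<And>k. k \<ge> 1 \<Longrightarrow> (\<lambda>d. of_real (mobius d) * s k * of_real (\<phi> (d*k) - \<phi> (d*k+d))) summable_on {1..}"
proof -
  have sF: "F summable_on T" using abs by (rule abs_summable_summable)
  then have hF: "(F has_sum infsum F T) T" by (rule has_sum_infsum)
  define T' where "T' = Sigma {1::nat..} (\<lambda>m. {1..m})"
  define h where "h = (\<lambda>(m,d). of_real (mobius d) * s (m div d) * of_real (\<phi> m - \<phi> (m+1)))"
  have "(F has_sum infsum F T) T = (h has_sum infsum F T) T'"
  proof (rule has_sum_reindex_bij_witness[where i = "\<lambda>(m,d). (m div d, d, m mod d)" and j = "\<lambda>(k,d,r). (d*k+r, d)"])
    fix a assume "a \<in> T"
    then obtain k d r where a: "a = (k,d,r)" "k \<ge> 1" "d \<ge> 1" "r < d" unfolding T_def by auto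
    show "(case (case a of (k, d, r) \<Rightarrow> (d * k + r, d)) of (m, d) \<Rightarrow> (m div d, d, m mod d)) = a"
      using a by simp
    show "(case a of (k, d, r) \<Rightarrow> (d * k + r, d)) \<in> T'"
      using a unfolding T'_def by (auto simp: trans_le_add1)
    show "h (case a of (k, d, r) \<Rightarrow> (d * k + r, d)) = F a"
      using a unfolding h_def F_def by (simp add: add.commute)
  next
    fix b assume "b \<in> T'"
    then obtain m d where b: "b = (m,d)" "d \<ge> 1" "d \<le> m" unfolding T'_def by auto
    show "(case (case b of (m, d) \<Rightarrow> (m div d, d, m mod d)) of (k, d, r) \<Rightarrow> (d * k + r, d)) = b"
      using b by simp
    have "m div d \<ge> 1" using b by (simp add: div_greater_zero_iff Suc_le_eq)
    then show "(case b of (m, d) \<Rightarrow> (m div d, d, m mod d)) \<in> T"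
      using b unfolding T_def by auto
  qed simp
  with hF have hh: "(h has_sum infsum F T) T'" by simp
  show "((\<lambda>m. (\<Sum>d\<in>{1..m}. of_real (mobius d) * s (m div d)) * of_real (\<phi> m - \<phi> (m+1)))
            has_sum infsum F T) {1..}"
  proof (rule has_sum_Sigma'[OF hh[unfolded T'_def]])
    fix m :: nat assume "m \<in> {1..}"
    show "((\<lambda>d. h (m, d)) has_sum (\<Sum>d\<in>{1..m}. of_real (mobius d) * s (m div d)) * of_real (\<phi> m - \<phi> (m+1))) {1..m}"
      by (rule has_sum_finiteI) (simp_all add: h_def sum_distrib_right)
  qed
  have inner: "(\<lambda>x. F (k, x)) summable_on Sigma {1..} (\<lambda>d. {..<d})" if k: "k \<in> {1..}" for k
    using summable_on_SigmaD1[of "\<lambda>k x. F (k,x)" "{1..}" "\<lambda>k. Sigma {1..} (\<lambda>d. {..<d})" k] sF k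
    unfolding T_def by simp
  have innerval: "((\<lambda>d. of_real (mobius d) * s k * of_real (\<phi> (d*k) - \<phi> (d*k+d)))
      has_sum (\<Sum>\<^sub>\<infinity>x\<in>Sigma {1..} (\<lambda>d. {..<d}). F (k, x))) {1..}" if k: "k \<in> {1..}" for k
  proof (rule has_sum_Sigma'[of "\<lambda>x. F (k,x)"])
    show "((\<lambda>x. F (k, x)) has_sum (\<Sum>\<^sub>\<infinity>x\<in>Sigma {1..} (\<lambda>d. {..<d}). F (k, x))) (Sigma {1..} (\<lambda>d. {..<d}))"
      using inner[OF k] by (rule has_sum_infsum)
  next
    fix d :: nat assume "d \<in> {1..}"
    have "(\<Sum>r<d. F (k, d, r)) = of_real (mobius d) * s k * of_real (\<Sum>r<d. \<phi> (d*k+r) - \<phi> (Suc (d*k+r)))"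
      unfolding F_def by (simp add: sum_distrib_left)
    also have "(\<Sum>r<d. \<phi> (d*k+r) - \<phi> (Suc (d*k+r))) = \<phi> (d*k) - \<phi> (d*k+d)"
      using sum_lessThan_telescope'[of "\<lambda>r. \<phi> (d*k+r)" d] by simp
    finally show "((\<lambda>y. F (k, d, y)) has_sum of_real (mobius d) * s k * of_real (\<phi> (d*k) - \<phi> (d*k+d))) {..<d}"
      by (intro has_sum_finiteI) simp_all
  qed
  show "\<And>k. k \<ge> 1 \<Longrightarrow> (\<lambda>d. of_real (mobius d) * s k * of_real (\<phi> (d*k) - \<phi> (d*k+d))) summable_on {1..}"
    using innerval unfolding summable_on_def by auto
  obtain tot where tot: "tot = infsum F T" by simp
  have hF2: "(F has_sum tot) (Sigma {1..} (\<lambda>k. Sigma {1..} (\<lambda>d. {..<d})))"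
    using hF tot T_def by simp
  have "((\<lambda>k. \<Sum>\<^sub>\<infinity>x\<in>Sigma {1..} (\<lambda>d. {..<d}). F (k, x)) has_sum tot) {1..}"
  proof (rule has_sum_Sigma'[OF hF2])
    fix k :: nat assume "k \<in> {1..}"
    show "((\<lambda>x. F (k, x)) has_sum (\<Sum>\<^sub>\<infinity>x\<in>Sigma {1..} (\<lambda>d. {..<d}). F (k, x))) (Sigma {1..} (\<lambda>d. {..<d}))"
      using inner[OF \<open>k \<in> {1..}\<close>] by (rule has_sum_infsum)
  qed
  moreover have "(\<Sum>\<^sub>\<infinity>x\<in>Sigma {1..} (\<lambda>d. {..<d}). F (k, x)) =
     (\<Sum>\<^sub>\<infinity>d\<in>{1..}. of_real (mobius d) * s k * of_real (\<phi> (d*k) - \<phi> (d*k+d)))" if "k \<in> {1..}" for k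
    using innerval[OF that] by (simp add: infsumI)
  ultimately show "((\<lambda>k. \<Sum>\<^sub>\<infinity>d\<in>{1..}. of_real (mobius d) * s k * of_real (\<phi> (d*k) - \<phi> (d*k+d)))
            has_sum infsum F T) {1..}"
    using has_sum_cong tot by (metis (no_types, lifting))
qed



lemma Suc_div_dvd:
  assumes "d > 0"
  shows "Suc X div d = X div d + (if d dvd Suc X then 1 else 0)"
  using assms by (auto simp: div_Suc dvd_eq_mod_eq_0)

lemma sum_divisors_swap:
  fixes g :: "nat \<Rightarrow> 'a::comm_semiring_1"
  shows "(\<Sum>m\<in>{1..X}. \<Sum>d | d dvd m. g d) = (\<Sum>d\<in>{1..X}. g d * of_nat (X div d))"
proof (induction X)
  case 0
  then show ?case by simp
next
  case (Suc X)
  have "(\<Sum>d\<in>{1..Suc X}. g d * of_nat (Suc X div d))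
      = (\<Sum>d\<in>{1..Suc X}. g d * of_nat (X div d) + (if d dvd Suc X then g d else 0))"
    by (intro sum.cong refl) (auto simp: Suc_div_dvd distrib_left)
  also have "\<dots> = (\<Sum>d\<in>{1..Suc X}. g d * of_nat (X div d)) + (\<Sum>d\<in>{1..Suc X}. if d dvd Suc X then g d else 0)"
    by (simp add: sum.distrib)
  also have "(\<Sum>d\<in>{1..Suc X}. g d * of_nat (X div d)) = (\<Sum>d\<in>{1..X}. g d * of_nat (X div d))"
    by (simp add: sum.cl_ivl_Suc)
  also have "(\<Sum>d\<in>{1..Suc X}. if d dvd Suc X then g d else 0) = (\<Sum>d | d dvd Suc X. g d)"
  proof -
    have "{d \<in> {1..Suc X}. d dvd Suc X} = {d. d dvd Suc X}"
      by (auto intro: dvd_imp_le simp: Suc_le_eq) (metis dvd_0_left_iff nat.distinct(1) gr0I)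
    moreover have "(\<Sum>d\<in>{1..Suc X}. if d dvd Suc X then g d else 0) = (\<Sum>d\<in>{d \<in> {1..Suc X}. d dvd Suc X}. g d)"
      by (rule sum.inter_filter[symmetric]) simp
    ultimately show ?thesis by (simp only:)
  qed
  finally show ?case using Suc by (simp add: sum.cl_ivl_Suc)
qed

lemma mobius_div_sum:
  assumes "X \<ge> 1"
  shows "(\<Sum>d\<in>{1..X}. mobius d * real (X div d)) = 1"
proof -
  have "(\<Sum>d\<in>{1..X}. mobius d * real (X div d)) = (\<Sum>m\<in>{1..X}. \<Sum>d | d dvd m. mobius d)"
    by (rule sum_divisors_swap[symmetric])
  also have "\<dots> = (\<Sum>m\<in>{1..X}. if m = 1 then 1 else 0)"
    by (intro sum.cong refl) (simp add: mobius_sum_dvd)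
  also have "\<dots> = 1" using assms by simp
  finally show ?thesis .
qed

lemma sum_div_extend:
  fixes g :: "nat \<Rightarrow> 'a::comm_semiring_1"
  assumes "X \<le> N"
  shows "(\<Sum>d\<in>{1..X}. g d * of_nat (X div d)) = (\<Sum>d\<in>{1..N}. g d * of_nat (X div d))"
  using assms by (intro sum.mono_neutral_left) auto

lemma mobius_div_sum_complex:
  assumes "X \<ge> 1" "X \<le> N"
  shows "(\<Sum>d\<in>{1..N}. of_real (mobius d) * of_nat (X div d)) = (1::complex)"
proof -
  have "(\<Sum>d\<in>{1..N}. of_real (mobius d) * of_nat (X div d)) = (\<Sum>d\<in>{1..X}. of_real (mobius d) * (of_nat (X div d) :: complex))"
    by (rule sum_div_extend[OF assms(2), symmetric])
  also have "\<dots> = of_real (\<Sum>d\<in>{1..X}. mobius d * real (X div d))"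
    by simp
  also have "\<dots> = 1" using mobius_div_sum[OF assms(1)] by simp
  finally show ?thesis .
qed

lemma S_nat:
  "S_fun a (real k) = (\<Sum>j\<in>{1..k}. a j * of_real (ln (real j)) * of_nat (k div j))"
  unfolding S_fun_def
  by (intro sum.cong) (auto simp: floor_divide_of_nat_eq)

lemma L1:
  "(\<Sum>d\<in>{1..m}. of_real (mobius d) * S_fun a (real (m div d)))
     = (\<Sum>j\<in>{1..m}. a j * of_real (ln (real j)))"
proof -
  define bb where "bb j = a j * of_real (ln (real j))" for j
  have "(\<Sum>d\<in>{1..m}. of_real (mobius d) * S_fun a (real (m div d)))
     = (\<Sum>d\<in>{1..m}. of_real (mobius d) * (\<Sum>j\<in>{1..m}. bb j * of_nat (m div d div j)))"
  proof (intro sum.cong refl)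
    fix d assume "d \<in> {1..m}"
    have "S_fun a (real (m div d)) = (\<Sum>j\<in>{1..m div d}. bb j * of_nat (m div d div j))"
      unfolding S_nat bb_def ..
    also have "\<dots> = (\<Sum>j\<in>{1..m}. bb j * of_nat (m div d div j))"
      by (rule sum_div_extend) simp
    finally show "of_real (mobius d) * S_fun a (real (m div d)) = of_real (mobius d) * (\<Sum>j\<in>{1..m}. bb j * of_nat (m div d div j))"
      by simp
  qed
  also have "\<dots> = (\<Sum>d\<in>{1..m}. \<Sum>j\<in>{1..m}. bb j * (of_real (mobius d) * of_nat (m div j div d)))"
    by (simp add: sum_distrib_left div_mult2_eq[symmetric] mult.commute mult.left_commute)
  also have "\<dots> = (\<Sum>j\<in>{1..m}. bb j * (\<Sum>d\<in>{1..m}. of_real (mobius d) * of_nat (m div j div d)))"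
    by (subst sum.swap) (simp add: sum_distrib_left)
  also have "\<dots> = (\<Sum>j\<in>{1..m}. bb j)"
  proof (intro sum.cong refl)
    fix j assume j: "j \<in> {1..m}"
    have "m div j \<ge> 1" using j by (simp add: Suc_le_eq div_greater_zero_iff)
    moreover have "m div j \<le> m" by simp
    ultimately show "bb j * (\<Sum>d\<in>{1..m}. of_real (mobius d) * of_nat (m div j div d)) = bb j"
      using mobius_div_sum_complex by simp
  qed
  finally show ?thesis unfolding bb_def .
qed

lemma abel_fin:
  fixes b :: "nat \<Rightarrow> complex" and \<phi> :: "nat \<Rightarrow> real"
  shows "(\<Sum>m\<in>{1..N}. b m * of_real (\<phi> m)) =
     (\<Sum>m\<in>{1..N}. (\<Sum>j\<in>{1..m}. b j) * of_real (\<phi> m - \<phi> (m+1))) + (\<Sum>j\<in>{1..N}. b j) * of_real (\<phi> (N+1))"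
proof (induction N)
  case 0
  then show ?case by simp
next
  case (Suc N)
  then show ?case by (simp add: sum.cl_ivl_Suc algebra_simps)
qed



lemma Suc_image_from1: "{1::nat..} = Suc ` UNIV"
proof (intro set_eqI iffI)
  fix x :: nat assume "x \<in> {1..}"
  then have "x = Suc (x - 1)" by simp
  then show "x \<in> Suc ` UNIV" by blast
qed auto

lemma has_sum_Suc_shift:
  "((\<lambda>m. f (Suc m)) has_sum s) UNIV \<longleftrightarrow> (f has_sum s) {1::nat..}"
  unfolding Suc_image_from1 using has_sum_reindex[of Suc UNIV f s] by (simp add: o_def)

lemma sum_shift_lessThan: "(\<Sum>m<D. f (Suc m)) = (\<Sum>d\<in>{1..D}. f d)"
  by (induction D) (simp_all add: sum.cl_ivl_Suc)

lemma has_sum_from1_tendsto: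
  fixes f :: "nat \<Rightarrow> 'a::{topological_comm_monoid_add,t2_space}"
  assumes "(f has_sum s) {1..}"
  shows "(\<lambda>D. \<Sum>d\<in>{1..D}. f d) \<longlonglongrightarrow> s"
proof -
  have "((\<lambda>m. f (Suc m)) has_sum s) UNIV" using assms has_sum_Suc_shift by blast
  then have "(\<lambda>m. f (Suc m)) sums s" by (rule has_sum_imp_sums)
  then show ?thesis unfolding sums_def sum_shift_lessThan .
qed

lemma powr_neg_has_integral:
  fixes c s :: real assumes "c > 1"
  shows "((\<lambda>u. c powr (-u)) has_integral (c powr (-s) / ln c)) {s..}"
proof -
  have ln: "ln c > 0" using assms by simp
  have "((\<lambda>u. exp (- ln c * u)) has_integral exp (- ln c * s) / ln c) {s..}"
    by (rule has_integral_exp_minus_to_infinity[OF ln])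
  moreover have "(\<lambda>u. c powr (-u)) = (\<lambda>u. exp (- ln c * u))" using assms
    by (auto simp: powr_def mult.commute)
  moreover have "c powr (-s) = exp (- ln c * s)" using assms by (auto simp: powr_def mult.commute)
  ultimately show ?thesis by simp
qed

lemma psi_nonneg:
  fixes x y \<sigma> :: real assumes x: "2 \<le> x" and xy: "x \<le> y" and s: "\<sigma> > 0"
  shows "0 \<le> x powr (-\<sigma>)/ln x - y powr (-\<sigma>)/ln y"
proof -
  have lx: "ln x > 0" using x by simp
  have lxy: "ln x \<le> ln y" using x xy by simp
  have B: "y powr (-\<sigma>) \<le> x powr (-\<sigma>)" using x xy s by (intro powr_mono2') auto
  have "y powr (-\<sigma>)/ln y \<le> x powr (-\<sigma>)/ln y" using B lx lxy by (intro divide_right_mono) auto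
  also have "\<dots> \<le> x powr (-\<sigma>)/ln x" using lx lxy by (intro divide_left_mono) auto
  finally show ?thesis by simp
qed

lemma psi_diff_bound:
  fixes x y \<sigma> :: real assumes x: "2 \<le> x" and xy: "x \<le> y" and s: "\<sigma> > 0"
  shows "x powr (-\<sigma>)/ln x - y powr (-\<sigma>)/ln y \<le> (\<sigma>/ln 2 + 1/(ln 2)^2) * (y - x) * x powr (-\<sigma>-1)"
proof -
  define A where "A = x powr (-\<sigma>)"
  define B where "B = y powr (-\<sigma>)"
  have x0: "x > 0" using x by simp
  have l2: "ln 2 > (0::real)" by simp
  have lx2: "ln x \<ge> ln 2" using x by simp
  have lxy: "ln x \<le> ln y" using x xy by simp
  have A0: "A > 0" unfolding A_def using x0 by simp
  have Ax: "x powr (-\<sigma>-1) = A / x" unfolding A_def using x0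
    by (simp add: powr_diff)
  have BA: "B = A * (y/x) powr (-\<sigma>)" unfolding A_def B_def using x0 xy
    by (simp add: powr_divide powr_minus divide_simps)
  have yx1: "y / x \<ge> 1" using x0 xy by simp
  have "(y/x) powr (-\<sigma>) = exp (- \<sigma> * ln (y/x))" using x0 xy by (simp add: powr_def mult.commute)
  also have "\<dots> \<ge> 1 + (- \<sigma> * ln (y/x))" by (rule exp_ge_add_one_self)
  finally have e1: "(y/x) powr (-\<sigma>) \<ge> 1 - \<sigma> * ln (y/x)" by simp
  have lnle: "ln (y/x) \<le> y/x - 1" using yx1 by (intro ln_le_minus_one) simp
  have lnge: "ln (y/x) \<ge> 0" using yx1 by simp
  have "\<sigma> * ln (y/x) \<le> \<sigma> * (y/x - 1)" using s lnle by (intro mult_left_mono) auto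
  with e1 have e2: "(y/x) powr (-\<sigma>) \<ge> 1 - \<sigma> * (y/x - 1)" by linarith
  have AB: "A - B \<le> \<sigma> * (y - x) * (A / x)"
  proof -
    have "A - B = A * (1 - (y/x) powr (-\<sigma>))" unfolding BA by (simp add: algebra_simps)
    also have "\<dots> \<le> A * (\<sigma> * (y/x - 1))" using A0 e2 by (intro mult_left_mono) auto
    also have "\<dots> = \<sigma> * (y - x) * (A / x)" using x0 by (simp add: field_simps)
    finally show ?thesis .
  qed
  have AB0: "A - B \<ge> 0" unfolding A_def B_def using x xy s by (simp add: powr_mono2')
  have t1: "(A - B) / ln x \<le> \<sigma> / ln 2 * (y - x) * (A / x)"
  proof -
    have lxp: "ln x > 0" using lx2 l2 by linarith
    have "(A - B) / ln x \<le> (A - B) / ln 2" using AB0 lx2 l2 lxp by (intro divide_left_mono) auto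
    also have "\<dots> \<le> \<sigma> * (y - x) * (A / x) / ln 2" using AB l2 by (intro divide_right_mono) auto
    also have "\<dots> = \<sigma> / ln 2 * (y - x) * (A / x)" by simp
    finally show ?thesis .
  qed
  have B0: "B \<ge> 0" "B \<le> A" unfolding A_def B_def using x xy s by (auto simp: powr_mono2')
  have t2: "B * (1 / ln x - 1 / ln y) \<le> 1 / (ln 2)^2 * (y - x) * (A / x)"
  proof -
    have lnyx: "ln y - ln x = ln (y/x)" using x0 xy by (simp add: ln_div)
    have lxp: "ln x > 0" "ln y > 0" using lx2 lxy l2 by linarith+
    have "1 / ln x - 1 / ln y = (ln y - ln x) / (ln x * ln y)" using lxp
      by (simp add: field_simps)
    then have d: "1 / ln x - 1 / ln y = ln (y/x) / (ln x * ln y)" using lnyx by simp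
    have pp: "ln x * ln y \<ge> (ln 2)^2" unfolding power2_eq_square
      using lx2 lxy l2 lxp by (intro mult_mono) auto
    have "ln (y/x) / (ln x * ln y) \<le> ln (y/x) / (ln 2)^2" using pp lnge l2 lxp by (intro divide_left_mono) auto
    also have "\<dots> \<le> (y/x - 1) / (ln 2)^2" using lnle by (intro divide_right_mono) auto
    finally have d2: "1 / ln x - 1 / ln y \<le> (y/x - 1) / (ln 2)^2" using d by simp
    have d0: "1 / ln x - 1 / ln y \<ge> 0" unfolding d using lnge lxp
      by (intro divide_nonneg_pos) auto
    have "B * (1 / ln x - 1 / ln y) \<le> A * ((y/x - 1) / (ln 2)^2)"
      using B0 d0 d2 A0 by (intro mult_mono) auto
    also have "\<dots> = 1 / (ln 2)^2 * (y - x) * (A / x)" using x0 by (simp add: field_simps)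
    finally show ?thesis .
  qed
  have "x powr (-\<sigma>)/ln x - y powr (-\<sigma>)/ln y = (A - B) / ln x + B * (1 / ln x - 1 / ln y)"
    by (simp add: diff_divide_distrib right_diff_distrib A_def B_def)
  also have "\<dots> \<le> \<sigma> / ln 2 * (y - x) * (A / x) + 1 / (ln 2)^2 * (y - x) * (A / x)"
    using t1 t2 by linarith
  also have "\<dots> = (\<sigma>/ln 2 + 1/(ln 2)^2) * (y - x) * x powr (-\<sigma>-1)"
    unfolding Ax by (simp add: algebra_simps)
  finally show ?thesis .
qed

lemma abs_mobius_le: "\<bar>mobius d\<bar> \<le> 1"
  unfolding mobius_def by auto

lemma summable_on_powr:
  fixes p :: real assumes "p < -1"
  shows "(\<lambda>d::nat. real d powr p) summable_on A"
proof -
  have "summable (\<lambda>d::nat. real d powr p)" using assms summable_real_powr_iff by blast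
  then have "(\<lambda>d::nat. real d powr p) summable_on UNIV"
    by (rule summable_nonneg_imp_summable_on) simp
  then show ?thesis by (rule summable_on_subset_banach) simp
qed

lemma zeta_has_sum:
  assumes u: "u > 1"
  shows "((\<lambda>m::nat. real m powr (-u)) has_sum zeta_real u) {1..}"
proof -
  have sm: "summable (\<lambda>n::nat. real n powr (-u))" using u summable_real_powr_iff by simp
  then have "summable (\<lambda>m::nat. real (Suc m) powr (-u))" by (subst summable_Suc_iff)
  then have "(\<lambda>m::nat. real (Suc m) powr (-u)) sums (\<Sum>m. real (Suc m) powr (-u))" by (rule summable_sums)
  moreover have "(\<Sum>m. real (Suc m) powr (-u)) = zeta_real u"
    unfolding zeta_real_def by (simp add: powr_minus divide_inverse)
  ultimately have "(\<lambda>m::nat. real (Suc m) powr (-u)) sums zeta_real u" by simp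
  then have "((\<lambda>m::nat. real (Suc m) powr (-u)) has_sum zeta_real u) UNIV"
    by (rule sums_nonneg_imp_has_sum) simp
  then show ?thesis using has_sum_Suc_shift[of "\<lambda>m. real m powr (-u)"] by simp
qed

lemma mobius_series_abs_summable:
  assumes u: "u > 1"
  shows "(\<lambda>d::nat. norm (mobius d * real d powr (-u))) summable_on A"
proof (rule Infinite_Sum.abs_summable_on_comparison_test')
  show "(\<lambda>d::nat. real d powr (-u)) summable_on A" using u by (intro summable_on_powr) simp
  fix d :: nat
  show "norm (mobius d * real d powr (-u)) \<le> real d powr (-u)"
    using abs_mobius_le[of d] by (simp add: abs_mult mult_left_le_one_le)
qed

lemma mobius_zeta:
  assumes u: "u > 1"
  shows "(\<Sum>\<^sub>\<infinity>d\<in>{1..}. mobius d * real d powr (-u)) * zeta_real u = 1"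
proof -
  define P where "P = (\<lambda>(d::nat, m::nat). mobius d * real d powr (-u) * real m powr (-u))"
  define T where "T = Sigma {1::nat..} (\<lambda>_. {1::nat..})"
  have hz: "((\<lambda>m::nat. real m powr (-u)) has_sum zeta_real u) {1..}" using zeta_has_sum[OF u] .
  have absP: "(\<lambda>x. norm (P x)) summable_on T"
    unfolding T_def
  proof (rule summable_on_SigmaI)
    fix d :: nat assume "d \<in> {1..}"
    show "((\<lambda>m. norm (P (d, m))) has_sum (\<bar>mobius d\<bar> * real d powr (-u) * zeta_real u)) {1..}"
      using has_sum_cmult_right[OF hz, of "\<bar>mobius d\<bar> * real d powr (-u)"]
      by (simp add: P_def abs_mult)
  next
    show "(\<lambda>d::nat. \<bar>mobius d\<bar> * real d powr (-u) * zeta_real u) summable_on {1..}"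
      using summable_on_cmult_left[OF mobius_series_abs_summable[OF u, of "{1..}"], of "zeta_real u"]
      by (simp add: abs_mult)
  qed simp
  then have sP: "P summable_on T" by (rule abs_summable_summable)
  then have hP: "(P has_sum infsum P T) T" by (rule has_sum_infsum)
  have msum: "(\<lambda>d::nat. mobius d * real d powr (-u)) summable_on {1..}"
    by (rule abs_summable_summable[OF mobius_series_abs_summable[OF u]])
  have v1: "infsum P T = (\<Sum>\<^sub>\<infinity>d\<in>{1..}. mobius d * real d powr (-u)) * zeta_real u"
  proof -
    have "((\<lambda>d::nat. mobius d * real d powr (-u) * zeta_real u) has_sum infsum P T) {1..}"
    proof (rule has_sum_Sigma'[of P "{1..}" "\<lambda>_. {1..}"])
      show "(P has_sum infsum P T) (Sigma {1..} (\<lambda>_. {1..}))" using hP unfolding T_def .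
      fix d :: nat assume "d \<in> {1..}"
      show "((\<lambda>m. P (d, m)) has_sum mobius d * real d powr (-u) * zeta_real u) {1..}"
        using has_sum_cmult_right[OF hz, of "mobius d * real d powr (-u)"] by (simp add: P_def)
    qed
    moreover have "((\<lambda>d::nat. mobius d * real d powr (-u) * zeta_real u) has_sum
        (\<Sum>\<^sub>\<infinity>d\<in>{1..}. mobius d * real d powr (-u)) * zeta_real u) {1..}"
      by (rule has_sum_cmult_left) (rule has_sum_infsum[OF msum])
    ultimately show ?thesis using has_sum_unique by blast
  qed
  define Q where "Q = (\<lambda>(N::nat, d::nat). mobius d * real N powr (-u))"
  define T' where "T' = Sigma {1::nat..} (\<lambda>N. {d. d dvd N})"
  have "(P has_sum infsum P T) T = (Q has_sum infsum P T) T'"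
  proof (rule has_sum_reindex_bij_witness[where i = "\<lambda>(N,d). (d, N div d)" and j = "\<lambda>(d,m). (d*m, d)"])
    fix a assume "a \<in> T"
    then obtain d m where a: "a = (d,m)" "d \<ge> 1" "m \<ge> 1" unfolding T_def by auto
    show "(case (case a of (d, m) \<Rightarrow> (d * m, d)) of (N, d) \<Rightarrow> (d, N div d)) = a" using a by simp
    show "(case a of (d, m) \<Rightarrow> (d * m, d)) \<in> T'" using a unfolding T'_def by simp
    show "Q (case a of (d, m) \<Rightarrow> (d * m, d)) = P a" using a unfolding P_def Q_def
      by (simp add: powr_mult)
  next
    fix b assume "b \<in> T'"
    then obtain N d where b: "b = (N,d)" "N \<ge> 1" "d dvd N" unfolding T'_def by auto
    then have d0: "d > 0" by (intro Nat.gr0I) auto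
    show "(case (case b of (N, d) \<Rightarrow> (d, N div d)) of (d, m) \<Rightarrow> (d * m, d)) = b" using b by simp
    have "N div d \<ge> 1" using b d0 by (metis One_nat_def Suc_le_eq div_greater_zero_iff dvd_imp_le)
    then show "(case b of (N, d) \<Rightarrow> (d, N div d)) \<in> T" using b d0 unfolding T_def by auto
  qed simp
  with hP have hQ: "(Q has_sum infsum P T) T'" by simp
  have "((\<lambda>N::nat. if N = 1 then 1 else 0) has_sum infsum P T) {1..}"
  proof (rule has_sum_Sigma'[OF hQ[unfolded T'_def]])
    fix N :: nat assume N: "N \<in> {1..}"
    have "(\<Sum>d | d dvd N. Q (N, d)) = (\<Sum>d | d dvd N. mobius d) * real N powr (-u)"
      unfolding Q_def by (simp add: sum_distrib_right)
    also have "\<dots> = (if N = 1 then 1 else 0)" using N by (simp add: mobius_sum_dvd)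
    finally show "((\<lambda>d. Q (N, d)) has_sum (if N = 1 then 1 else 0)) {d. d dvd N}"
      using N by (intro has_sum_finiteI) auto
  qed
  moreover have "((\<lambda>N::nat. if N = 1 then 1 else 0) has_sum (1::real)) {1..}"
    by (rule has_sum_finite_neutralI[of "{1}"]) auto
  ultimately have "infsum P T = 1" using has_sum_unique by blast
  with v1 show ?thesis by simp
qed



definition psi :: "real \<Rightarrow> nat \<Rightarrow> real" where
  "psi \<sigma> x = real x powr (-\<sigma>) / ln (real x)"

lemma S_one: "S_fun a (real 1) = 0"
  using S_nat[of a 1] by simp

lemma S_bound:
  assumes hS: "\<And>v. v > 1 \<Longrightarrow> (\<lambda>k. norm (S_fun a (real k)) / real k powr v) \<longlonglongrightarrow> 0"
    and v: "v > 1"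
  shows "\<exists>C>0. \<forall>k\<ge>1. norm (S_fun a (real k)) \<le> C * real k powr v"
proof -
  have "eventually (\<lambda>k. norm (S_fun a (real k)) / real k powr v < 1) sequentially"
    using order_tendstoD(2)[OF hS[OF v]] by simp
  then obtain K where K: "\<And>k. k \<ge> K \<Longrightarrow> norm (S_fun a (real k)) / real k powr v < 1"
    unfolding eventually_sequentially by blast
  define C where "C = 1 + (\<Sum>k<K. norm (S_fun a (real k)))"
  have C1: "C \<ge> 1" unfolding C_def by (simp add: sum_nonneg)
  have "norm (S_fun a (real k)) \<le> C * real k powr v" if k: "k \<ge> 1" for k
  proof -
    have kv: "real k powr v \<ge> 1" using k v by (intro ge_one_powr_ge_zero) auto
    show ?thesis
    proof (cases "k < K")
      case True
      then have "norm (S_fun a (real k)) \<le> (\<Sum>k<K. norm (S_fun a (real k)))"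
        by (intro member_le_sum) auto
      also have "\<dots> \<le> C" unfolding C_def by simp
      also have "\<dots> \<le> C * real k powr v" using C1 kv mult_right_mono[of 1 C "real k powr v"] by simp
      finally show ?thesis .
    next
      case False
      then have "norm (S_fun a (real k)) / real k powr v < 1" using K by simp
      then have "norm (S_fun a (real k)) < real k powr v" using kv k by (auto simp: divide_less_eq)
      also have "\<dots> \<le> C * real k powr v" using C1 kv mult_right_mono[of 1 C "real k powr v"] by simp
      finally show ?thesis by simp
    qed
  qed
  then show ?thesis using C1 by (intro exI[of _ C]) auto
qed

definition Kc :: "real \<Rightarrow> real" where "Kc \<sigma> = \<sigma>/ln 2 + 1/(ln 2)^2"

lemma psi_delta:
  assumes s: "\<sigma> > 0" and x: "2 \<le> x" and xy: "x \<le> y"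
  shows "0 \<le> psi \<sigma> x - psi \<sigma> y" "psi \<sigma> x - psi \<sigma> y \<le> Kc \<sigma> * (real y - real x) * real x powr (-\<sigma>-1)"
  using psi_nonneg[of "real x" "real y" \<sigma>] psi_diff_bound[of "real x" "real y" \<sigma>] assms
  unfolding psi_def Kc_def by auto

lemma Kc_pos: "\<sigma> > 0 \<Longrightarrow> Kc \<sigma> > 0"
  unfolding Kc_def by (simp add: add_pos_pos)

lemma E_summable:
  assumes s: "\<sigma> > 1" and p: "p < -1"
  shows "(\<lambda>x. case x of (k, d, r) \<Rightarrow> real k powr p * real d powr (-\<sigma>-1))
          summable_on Sigma {1::nat..} (\<lambda>k. Sigma {1::nat..} (\<lambda>d. {..<d}))"
proof -
  define E where "E = (\<lambda>x. case x of (k::nat, d::nat, r::nat) \<Rightarrow> real k powr p * real d powr (-\<sigma>-1))"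
  have zs: "(\<lambda>d::nat. real d powr (-\<sigma>)) summable_on {1..}" using s by (intro summable_on_powr) simp
  define Zs where "Zs = (\<Sum>\<^sub>\<infinity>d\<in>{1::nat..}. real d powr (-\<sigma>))"
  have hZ: "((\<lambda>d::nat. real d powr (-\<sigma>)) has_sum Zs) {1..}" unfolding Zs_def using zs by (rule has_sum_infsum)
  have inner: "((\<lambda>y. E (k, y)) has_sum real k powr p * Zs) (Sigma {1..} (\<lambda>d. {..<d}))" if "k \<in> {1..}" for k
  proof -
    have r: "((\<lambda>r. E (k, d, r)) has_sum real k powr p * real d powr (-\<sigma>)) {..<d}" if d: "d \<in> {1..}" for d
    proof (rule has_sum_finiteI)
      have "real d * real d powr (-\<sigma>-1) = real d powr (-\<sigma>)"
        using d by (simp add: powr_add[symmetric] powr_diff)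
      then show "real k powr p * real d powr - \<sigma> = (\<Sum>r<d. E (k, d, r))"
        unfolding E_def by (simp add: mult.left_commute)
    qed simp
    have g: "((\<lambda>d::nat. real k powr p * real d powr (-\<sigma>)) has_sum real k powr p * Zs) {1..}"
      by (rule has_sum_cmult_right[OF hZ])
    have sm: "(\<lambda>y. E (k, y)) summable_on Sigma {1..} (\<lambda>d. {..<d})"
    proof (rule summable_on_SigmaI[where f = "\<lambda>y. E (k, y)" and g = "\<lambda>d. real k powr p * real d powr (-\<sigma>)"])
      show "((\<lambda>r. E (k, d, r)) has_sum real k powr p * real d powr (-\<sigma>)) {..<d}" if "d \<in> {1..}" for d
        using r[OF that] .
      show "(\<lambda>d::nat. real k powr p * real d powr (-\<sigma>)) summable_on {1..}"
        using g unfolding summable_on_def by blast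
      show "0 \<le> E (k, d, r)" for d r unfolding E_def by simp
    qed
    show ?thesis
      by (rule has_sum_SigmaI[where f = "\<lambda>y. E (k, y)", OF _ g sm]) (use r in auto)
  qed
  have outer: "(\<lambda>k::nat. real k powr p * Zs) summable_on {1..}"
    using summable_on_cmult_left[OF summable_on_powr[OF p]] by simp
  have "E summable_on Sigma {1::nat..} (\<lambda>k. Sigma {1::nat..} (\<lambda>d. {..<d}))"
    by (rule summable_on_SigmaI[where f = E, OF inner outer]) (auto simp: E_def)
  then show ?thesis unfolding E_def .
qed



lemma partB_integral:
  assumes s: "\<sigma> > 1" and k: "k \<ge> 2"
  shows "(\<lambda>D. \<Sum>d\<in>{1..D}. mobius d * (psi \<sigma> (d*k) - psi \<sigma> (d*k+d)))
          \<longlonglongrightarrow> integral {\<sigma>..} (\<lambda>u. (1 / real k powr u - 1 / real (k+1) powr u) / zeta_real u)"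
proof -
  define w where "w u = real k powr (-u) - real (k+1) powr (-u)" for u
  define fD where "fD D u = (\<Sum>d\<in>{1..D}. mobius d * (real (d*k) powr (-u) - real (d*k+d) powr (-u)))" for D u
  define g where "g u = (1 / real k powr u - 1 / real (k+1) powr u) / zeta_real u" for u
  have fD_int: "(fD D has_integral (\<Sum>d\<in>{1..D}. mobius d * (psi \<sigma> (d*k) - psi \<sigma> (d*k+d)))) {\<sigma>..}" for D
    unfolding fD_def
  proof (rule has_integral_sum)
    fix d assume d: "d \<in> {1..D}"
    have "d * k \<ge> 1 * 2" using d k by (intro mult_le_mono) auto
    then have c1: "real (d*k) > 1" "real (d*k+d) > 1" by linarith+
    show "((\<lambda>u. mobius d * (real (d*k) powr (-u) - real (d*k+d) powr (-u))) has_integral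
          mobius d * (psi \<sigma> (d*k) - psi \<sigma> (d*k+d))) {\<sigma>..}"
      unfolding psi_def
      by (intro has_integral_mult_right has_integral_diff powr_neg_has_integral c1)
  qed simp
  have fD_eq: "fD D u = (\<Sum>d\<in>{1..D}. mobius d * real d powr (-u)) * w u" for D u
  proof -
    have "real (d*k) powr (-u) - real (d*k+d) powr (-u) = real d powr (-u) * w u" for d
    proof -
      have "real (d*k+d) = real d * real (k+1)" by (simp add: algebra_simps)
      then show ?thesis unfolding w_def by (simp add: powr_mult right_diff_distrib)
    qed
    then show ?thesis unfolding fD_def by (simp add: sum_distrib_right mult.assoc)
  qed
  have zs: "(\<lambda>d::nat. real d powr (-\<sigma>)) summable_on {1..}" using s by (intro summable_on_powr) simp
  define Zs where "Zs = (\<Sum>\<^sub>\<infinity>d\<in>{1::nat..}. real d powr (-\<sigma>))"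
  have hZ: "((\<lambda>d::nat. real d powr (-\<sigma>)) has_sum Zs) {1..}" unfolding Zs_def using zs by (rule has_sum_infsum)
  have w0: "w u \<ge> 0" if "u \<ge> \<sigma>" for u
    unfolding w_def using that s k by (simp add: powr_mono2')
  have bound: "norm (fD D u) \<le> Zs * w u" if u: "u \<in> {\<sigma>..}" for D u
  proof -
    have "\<bar>\<Sum>d\<in>{1..D}. mobius d * real d powr (-u)\<bar> \<le> (\<Sum>d\<in>{1..D}. \<bar>mobius d * real d powr (-u)\<bar>)"
      by (rule sum_abs)
    also have "\<dots> \<le> (\<Sum>d\<in>{1..D}. real d powr (-\<sigma>))"
    proof (rule sum_mono)
      fix d assume d: "d \<in> {1..D}"
      have "\<bar>mobius d * real d powr (-u)\<bar> \<le> real d powr (-u)"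
        using abs_mobius_le[of d] by (simp add: abs_mult mult_left_le_one_le)
      also have "\<dots> \<le> real d powr (-\<sigma>)" using d u by (intro powr_mono) auto
      finally show "\<bar>mobius d * real d powr (-u)\<bar> \<le> real d powr (-\<sigma>)" .
    qed
    also have "\<dots> \<le> Zs" by (rule finite_sum_le_has_sum[OF hZ]) auto
    finally have "\<bar>\<Sum>d\<in>{1..D}. mobius d * real d powr (-u)\<bar> \<le> Zs" .
    then show ?thesis using w0[of u] u unfolding fD_eq by (simp add: abs_mult mult_right_mono)
  qed
  have h_int: "(\<lambda>u. Zs * w u) integrable_on {\<sigma>..}"
  proof -
    have c1: "real k > 1" "real (k+1) > 1" using k by simp_all
    show ?thesis unfolding w_def
      by (rule has_integral_integrable[OF has_integral_mult_right[OF has_integral_diff[OF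
            powr_neg_has_integral[OF c1(1), of \<sigma>] powr_neg_has_integral[OF c1(2), of \<sigma>]]]])
  qed
  have conv: "(\<lambda>D. fD D u) \<longlonglongrightarrow> g u" if u: "u \<in> {\<sigma>..}" for u
  proof -
    have u1: "u > 1" using u s by simp
    have msum: "(\<lambda>d::nat. mobius d * real d powr (-u)) summable_on {1..}"
      by (rule abs_summable_summable[OF mobius_series_abs_summable[OF u1]])
    define M where "M = (\<Sum>\<^sub>\<infinity>d\<in>{1..}. mobius d * real d powr (-u))"
    have "(\<lambda>D. \<Sum>d\<in>{1..D}. mobius d * real d powr (-u)) \<longlonglongrightarrow> M"
      unfolding M_def by (rule has_sum_from1_tendsto[OF has_sum_infsum[OF msum]])
    then have "(\<lambda>D. fD D u) \<longlonglongrightarrow> M * w u" unfolding fD_eq by (intro tendsto_mult_right)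
    moreover have "M * w u = g u"
    proof -
      have Mz: "M * zeta_real u = 1" unfolding M_def by (rule mobius_zeta[OF u1])
      then have "zeta_real u \<noteq> 0" by auto
      then have "M = 1 / zeta_real u" using Mz by (simp add: field_simps)
      then show ?thesis unfolding g_def w_def by (simp add: powr_minus_divide)
    qed
    ultimately show ?thesis by simp
  qed
  have fD_integrable: "fD D integrable_on {\<sigma>..}" for D using fD_int by blast
  have "(\<lambda>D. integral {\<sigma>..} (fD D)) \<longlonglongrightarrow> integral {\<sigma>..} g"
    by (rule dominated_convergence(2)[OF fD_integrable h_int bound conv])
  moreover have "integral {\<sigma>..} (fD D) = (\<Sum>d\<in>{1..D}. mobius d * (psi \<sigma> (d*k) - psi \<sigma> (d*k+d)))" for D
    using fD_int by (rule integral_unique)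
  ultimately show ?thesis unfolding g_def by simp
qed



lemma has_sum_from2:
  fixes f :: "nat \<Rightarrow> 'a::{topological_comm_monoid_add,t2_space}"
  assumes h: "(f has_sum s) {1..}" and f1: "f 1 = 0"
  shows "(\<lambda>j. f (j+2)) sums s"
proof -
  have "(f has_sum s) {2..}"
  proof -
    have "(f has_sum s) {1..} \<longleftrightarrow> (f has_sum s) {2..}"
    proof (rule has_sum_cong_neutral)
      fix x :: nat assume "x \<in> {1..} - {2..}"
      then have "x = 1" by auto
      then show "f x = 0" using f1 by simp
    qed auto
    then show ?thesis using h by simp
  qed
  moreover have "{2::nat..} = (\<lambda>j. j+2) ` UNIV"
  proof (intro set_eqI iffI)
    fix x :: nat assume "x \<in> {2..}"
    then have "x = (x - 2) + 2" by simp
    then show "x \<in> (\<lambda>j. j+2) ` UNIV" by blast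
  qed auto
  moreover have "inj (\<lambda>j::nat. j+2)" by (simp add: inj_on_def)
  ultimately have "((\<lambda>j. f (j+2)) has_sum s) UNIV"
    using has_sum_reindex[of "\<lambda>j::nat. j+2" UNIV f s] by (simp add: o_def)
  then show ?thesis by (rule has_sum_imp_sums)
qed

lemma partB_abs:
  assumes hS: "\<And>v. v > 1 \<Longrightarrow> (\<lambda>k. norm (S_fun a (real k)) / real k powr v) \<longlonglongrightarrow> 0"
    and s: "\<sigma> > 1"
  shows "(\<lambda>x. norm ((\<lambda>(k,d,r). of_real (mobius d) * S_fun a (real k) * of_real (psi \<sigma> (d*k+r) - psi \<sigma> (d*k+r+1))) x))
          summable_on Sigma {1::nat..} (\<lambda>k. Sigma {1::nat..} (\<lambda>d. {..<d}))"
proof -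
  define v where "v = (1 + \<sigma>) / 2"
  have v1: "v > 1" "v < \<sigma>" using s unfolding v_def by simp_all
  obtain C where C: "C > 0" "\<And>k. k \<ge> 1 \<Longrightarrow> norm (S_fun a (real k)) \<le> C * real k powr v"
    using S_bound[OF hS v1(1)] by blast
  define p where "p = v - \<sigma> - 1"
  have p: "p < -1" using v1 unfolding p_def by simp
  have K0: "Kc \<sigma> > 0" using s Kc_pos by simp
  have Es: "(\<lambda>x. C * Kc \<sigma> * (case x of (k, d, r) \<Rightarrow> real k powr p * real d powr (-\<sigma>-1)))
          summable_on Sigma {1::nat..} (\<lambda>k. Sigma {1::nat..} (\<lambda>d. {..<d}))"
    by (rule summable_on_cmult_right[OF E_summable[OF s p]])
  show ?thesis
  proof (rule summable_on_comparison_test[OF Es])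
    fix x assume x: "x \<in> Sigma {1::nat..} (\<lambda>k. Sigma {1::nat..} (\<lambda>d. {..<d}))"
    then obtain k d r where kdr: "x = (k,d,r)" "k \<ge> 1" "d \<ge> 1" "r < d" by auto
    show "0 \<le> norm ((\<lambda>(k,d,r). of_real (mobius d) * S_fun a (real k) * of_real (psi \<sigma> (d*k+r) - psi \<sigma> (d*k+r+1))) x)"
      by simp
    show "norm ((\<lambda>(k,d,r). of_real (mobius d) * S_fun a (real k) * of_real (psi \<sigma> (d*k+r) - psi \<sigma> (d*k+r+1))) x)
          \<le> C * Kc \<sigma> * (case x of (k, d, r) \<Rightarrow> real k powr p * real d powr (-\<sigma>-1))"
    proof (cases "k = 1")
      case True
      then show ?thesis using kdr C K0 S_one[of a] by simp
    next
      case False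
      then have k2: "k \<ge> 2" using kdr by simp
      define X where "X = d*k+r"
      have dk2: "d * k \<ge> 2" using kdr k2 by (metis mult_le_mono nat_mult_1 le_trans order_refl)
      then have X2: "X \<ge> 2" unfolding X_def by simp
      have del: "0 \<le> psi \<sigma> X - psi \<sigma> (X+1)" "psi \<sigma> X - psi \<sigma> (X+1) \<le> Kc \<sigma> * (real (X+1) - real X) * real X powr (-\<sigma>-1)"
        using psi_delta[of \<sigma> X "X+1"] s X2 by auto
      have "real X powr (-\<sigma>-1) \<le> real (d*k) powr (-\<sigma>-1)"
        using dk2 s kdr unfolding X_def by (intro powr_mono2') auto
      also have "\<dots> = real d powr (-\<sigma>-1) * real k powr (-\<sigma>-1)" by (simp add: powr_mult)
      finally have XX: "real X powr (-\<sigma>-1) \<le> real d powr (-\<sigma>-1) * real k powr (-\<sigma>-1)" .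
      have D1: "psi \<sigma> X - psi \<sigma> (X+1) \<le> Kc \<sigma> * (real d powr (-\<sigma>-1) * real k powr (-\<sigma>-1))"
      proof -
        have a1: "psi \<sigma> X - psi \<sigma> (X+1) \<le> Kc \<sigma> * real X powr (-\<sigma>-1)" using del(2) by simp
        have a2: "Kc \<sigma> * real X powr (-\<sigma>-1) \<le> Kc \<sigma> * (real d powr (-\<sigma>-1) * real k powr (-\<sigma>-1))"
          by (rule mult_left_mono[OF XX]) (use K0 in simp)
        show ?thesis using a1 a2 by linarith
      qed
      have "norm (of_real (mobius d) * S_fun a (real k) * of_real (psi \<sigma> X - psi \<sigma> (X+1)) :: complex)
            = \<bar>mobius d\<bar> * norm (S_fun a (real k)) * (psi \<sigma> X - psi \<sigma> (X+1))"
        using del(1) by (simp add: norm_mult del: of_real_diff)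
      also have "\<dots> \<le> 1 * (C * real k powr v) * (Kc \<sigma> * (real d powr (-\<sigma>-1) * real k powr (-\<sigma>-1)))"
        using abs_mobius_le[of d] C(2)[of k] kdr del(1) D1 C(1)
        by (intro mult_mono) (auto intro: mult_nonneg_nonneg)
      also have "\<dots> = C * Kc \<sigma> * (real k powr p * real d powr (-\<sigma>-1))"
        unfolding p_def by (simp add: powr_add[symmetric] algebra_simps)
      finally show ?thesis using kdr unfolding X_def by simp
    qed
  qed
qed



lemma boundary_tendsto:
  assumes hS: "\<And>v. v > 1 \<Longrightarrow> (\<lambda>k. norm (S_fun a (real k)) / real k powr v) \<longlonglongrightarrow> 0"
    and s: "\<sigma> > 1"
  shows "(\<lambda>M. (\<Sum>d\<in>{1..M}. of_real (mobius d) * S_fun a (real (M div d))) * of_real (psi \<sigma> (M+1))) \<longlonglongrightarrow> 0"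
proof -
  define v where "v = (1 + \<sigma>) / 2"
  have v1: "v > 1" "v < \<sigma>" using s unfolding v_def by simp_all
  obtain C where C: "C > 0" "\<And>k. k \<ge> 1 \<Longrightarrow> norm (S_fun a (real k)) \<le> C * real k powr v"
    using S_bound[OF hS v1(1)] by blast
  have zv: "(\<lambda>d::nat. real d powr (-v)) summable_on {1..}" using v1 by (intro summable_on_powr) simp
  define Zv where "Zv = (\<Sum>\<^sub>\<infinity>d\<in>{1::nat..}. real d powr (-v))"
  have hZ: "((\<lambda>d::nat. real d powr (-v)) has_sum Zv) {1..}" unfolding Zv_def using zv by (rule has_sum_infsum)
  have l2: "ln (2::real) > 0" by simp
  have bnd: "norm ((\<Sum>d\<in>{1..M}. of_real (mobius d) * S_fun a (real (M div d))) * of_real (psi \<sigma> (M+1)))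
      \<le> C * Zv / ln 2 * real M powr (v - \<sigma>)" if M: "M \<ge> 1" for M
  proof -
    have "norm (\<Sum>d\<in>{1..M}. of_real (mobius d) * S_fun a (real (M div d)))
        \<le> (\<Sum>d\<in>{1..M}. norm (of_real (mobius d) * S_fun a (real (M div d))))"
      by (rule norm_sum)
    also have "\<dots> \<le> (\<Sum>d\<in>{1..M}. C * real M powr v * real d powr (-v))"
    proof (rule sum_mono)
      fix d assume d: "d \<in> {1..M}"
      have Md: "M div d \<ge> 1" using d by (simp add: Suc_le_eq div_greater_zero_iff)
      have "real (M div d) * real d \<le> real M"
        by (metis of_nat_le_iff of_nat_mult div_times_less_eq_dividend)
      then have Md2: "real (M div d) \<le> real M / real d" using d by (simp add: field_simps)
      have "norm (of_real (mobius d) * S_fun a (real (M div d)) :: complex) \<le> 1 * (C * real (M div d) powr v)"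
        unfolding norm_mult using abs_mobius_le[of d] C(2)[OF Md] C(1)
        by (intro mult_mono) auto
      also have "\<dots> \<le> C * (real M / real d) powr v" using Md2 v1 C(1) Md
        by (simp add: powr_mono2)
      also have "\<dots> = C * real M powr v * real d powr (-v)"
        by (simp add: powr_divide powr_minus_divide)
      finally show "norm (of_real (mobius d) * S_fun a (real (M div d))) \<le> C * real M powr v * real d powr (-v)" .
    qed
    also have "\<dots> = C * real M powr v * (\<Sum>d\<in>{1..M}. real d powr (-v))" by (simp add: sum_distrib_left)
    also have "\<dots> \<le> C * real M powr v * Zv"
      using C(1) by (intro mult_left_mono finite_sum_le_has_sum[OF hZ]) auto
    finally have nB: "norm (\<Sum>d\<in>{1..M}. of_real (mobius d) * S_fun a (real (M div d))) \<le> C * real M powr v * Zv" .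
    have p0: "psi \<sigma> (M+1) \<ge> 0" unfolding psi_def using M by simp
    have "psi \<sigma> (M+1) \<le> real (M+1) powr (-\<sigma>) / ln 2"
      unfolding psi_def using M by (intro divide_left_mono) auto
    also have "\<dots> \<le> real M powr (-\<sigma>) / ln 2"
      using M s by (intro divide_right_mono powr_mono2') auto
    finally have p1: "psi \<sigma> (M+1) \<le> real M powr (-\<sigma>) / ln 2" .
    have "norm ((\<Sum>d\<in>{1..M}. of_real (mobius d) * S_fun a (real (M div d))) * of_real (psi \<sigma> (M+1)))
        = norm (\<Sum>d\<in>{1..M}. of_real (mobius d) * S_fun a (real (M div d))) * psi \<sigma> (M+1)"
      using p0 by (simp add: norm_mult)
    also have "\<dots> \<le> (C * real M powr v * Zv) * (real M powr (-\<sigma>) / ln 2)"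
      using nB p1 p0 order_trans[OF norm_ge_zero nB]
      by (intro mult_mono) auto
    also have "\<dots> = C * Zv / ln 2 * (real M powr v * real M powr (-\<sigma>))" by simp
    also have "real M powr v * real M powr (-\<sigma>) = real M powr (v - \<sigma>)"
      by (simp add: powr_add[symmetric])
    finally show ?thesis .
  qed
  have "(\<lambda>M. real M powr (v - \<sigma>)) \<longlonglongrightarrow> 0"
    by (rule tendsto_neg_powr[OF _ filterlim_real_sequentially]) (use v1 in simp)
  then have lim: "(\<lambda>M. C * Zv / ln 2 * real M powr (v - \<sigma>)) \<longlonglongrightarrow> 0"
    by (rule tendsto_mult_right_zero)
  have ev: "eventually (\<lambda>M. norm ((\<Sum>d\<in>{1..M}. of_real (mobius d) * S_fun a (real (M div d))) * of_real (psi \<sigma> (M+1)))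
      \<le> C * Zv / ln 2 * real M powr (v - \<sigma>)) sequentially"
    using bnd unfolding eventually_sequentially by blast
  show ?thesis by (rule Lim_null_comparison[OF ev lim])
qed

lemma partB:
  assumes hS: "\<And>v. v > 1 \<Longrightarrow> (\<lambda>k. norm (S_fun a (real k)) / real k powr v) \<longlonglongrightarrow> 0"
    and s: "\<sigma> > 1"
  shows "\<exists>tot. (\<lambda>j. S_fun a (real (j + 2)) *
              of_real (integral {\<sigma>..} (\<lambda>u. (1 / real (j + 2) powr u - 1 / real (j + 3) powr u) / zeta_real u)))
            sums tot \<and> g_fun a \<sigma> = a 1 + tot"
proof -
  note R = regroup[OF partB_abs[OF hS s]]
  obtain tot where R1: "((\<lambda>m. (\<Sum>d\<in>{1..m}. of_real (mobius d) * S_fun a (real (m div d))) * of_real (psi \<sigma> m - psi \<sigma> (m+1)))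
            has_sum tot) {1..}"
    and R2: "((\<lambda>k. \<Sum>\<^sub>\<infinity>d\<in>{1..}. of_real (mobius d) * S_fun a (real k) * of_real (psi \<sigma> (d*k) - psi \<sigma> (d*k+d)))
            has_sum tot) {1..}"
    using R(1) R(2) by blast
  define Ik where "Ik k = integral {\<sigma>..} (\<lambda>u. (1 / real k powr u - 1 / real (k+1) powr u) / zeta_real u)" for k
  define f where "f k = (\<Sum>\<^sub>\<infinity>d\<in>{1..}. of_real (mobius d) * S_fun a (real k) * of_real (psi \<sigma> (d*k) - psi \<sigma> (d*k+d)))" for k
  have fk: "f k = S_fun a (real k) * of_real (Ik k)" if k: "k \<ge> 2" for k
  proof -
    have sm: "(\<lambda>d. of_real (mobius d) * S_fun a (real k) * of_real (psi \<sigma> (d*k) - psi \<sigma> (d*k+d))) summable_on {1..}"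
      using R(3)[of k] k by simp
    have t1: "(\<lambda>D. \<Sum>d\<in>{1..D}. of_real (mobius d) * S_fun a (real k) * of_real (psi \<sigma> (d*k) - psi \<sigma> (d*k+d))) \<longlonglongrightarrow> f k"
      unfolding f_def by (rule has_sum_from1_tendsto[OF has_sum_infsum[OF sm]])
    have eq: "(\<Sum>d\<in>{1..D}. of_real (mobius d) * S_fun a (real k) * of_real (psi \<sigma> (d*k) - psi \<sigma> (d*k+d)))
        = S_fun a (real k) * of_real (\<Sum>d\<in>{1..D}. mobius d * (psi \<sigma> (d*k) - psi \<sigma> (d*k+d)))" for D
      unfolding of_real_sum sum_distrib_left by (intro sum.cong refl) (simp add: mult_ac del: of_real_diff)
    have t2: "(\<lambda>D. S_fun a (real k) * of_real (\<Sum>d\<in>{1..D}. mobius d * (psi \<sigma> (d*k) - psi \<sigma> (d*k+d))))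
        \<longlonglongrightarrow> S_fun a (real k) * of_real (Ik k)"
      unfolding Ik_def by (intro tendsto_mult_left tendsto_of_real partB_integral[OF s k])
    show ?thesis using t1 t2 unfolding eq by (rule LIMSEQ_unique)
  qed
  have f1: "f 1 = 0" unfolding f_def using S_one[of a] by simp
  have "(\<lambda>j. f (j+2)) sums tot" using has_sum_from2[OF R2[folded f_def] f1] .
  moreover have "f (j+2) = S_fun a (real (j + 2)) *
              of_real (integral {\<sigma>..} (\<lambda>u. (1 / real (j + 2) powr u - 1 / real (j + 3) powr u) / zeta_real u))" for j
  proof -
    have "f (j+2) = S_fun a (real (j + 2)) * of_real (Ik (j+2))" by (rule fk) simp
    moreover have "real (j + 2 + 1) = real (j + 3)" by simp
    ultimately show ?thesis unfolding Ik_def by (simp only:)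
  qed
  ultimately have sumsB: "(\<lambda>j. S_fun a (real (j + 2)) *
              of_real (integral {\<sigma>..} (\<lambda>u. (1 / real (j + 2) powr u - 1 / real (j + 3) powr u) / zeta_real u))) sums tot"
    by simp
  define bb where "bb j = a j * of_real (ln (real j))" for j
  define Bp where "Bp m = (\<Sum>d\<in>{1..m}. of_real (mobius d) * S_fun a (real (m div d)))" for m
  have P: "(\<lambda>M. \<Sum>m\<in>{1..M}. Bp m * of_real (psi \<sigma> m - psi \<sigma> (m+1))) \<longlonglongrightarrow> tot"
    unfolding Bp_def by (rule has_sum_from1_tendsto[OF R1])
  have Q: "(\<lambda>M. Bp M * of_real (psi \<sigma> (M+1))) \<longlonglongrightarrow> 0"
    unfolding Bp_def by (rule boundary_tendsto[OF hS s])
  have PQ: "(\<lambda>M. a 1 + ((\<Sum>m\<in>{1..M}. Bp m * of_real (psi \<sigma> m - psi \<sigma> (m+1))) + Bp M * of_real (psi \<sigma> (M+1))))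
      \<longlonglongrightarrow> a 1 + (tot + 0)"
    by (intro tendsto_add tendsto_const P Q)
  have eqM: "(\<Sum>m<M. a (m+1) * of_real (real (m+1) powr (-\<sigma>)))
      = a 1 + ((\<Sum>m\<in>{1..M}. Bp m * of_real (psi \<sigma> m - psi \<sigma> (m+1))) + Bp M * of_real (psi \<sigma> (M+1)))"
    if M: "M \<ge> 1" for M
  proof -
    have "(\<Sum>m<M. a (m+1) * of_real (real (m+1) powr (-\<sigma>))) = (\<Sum>j\<in>{1..M}. a j * of_real (real j powr (-\<sigma>)))"
      using sum_shift_lessThan[of "\<lambda>j. a j * of_real (real j powr (-\<sigma>))" M] by simp
    also have "\<dots> = (\<Sum>j\<in>{1..M}. bb j * of_real (psi \<sigma> j) + (if j = 1 then a 1 else 0))"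
    proof (intro sum.cong refl)
      fix j assume j: "j \<in> {1..M}"
      show "a j * of_real (real j powr (-\<sigma>)) = bb j * of_real (psi \<sigma> j) + (if j = 1 then a 1 else 0)"
      proof (cases "j = 1")
        case True then show ?thesis by (simp add: bb_def psi_def)
      next
        case False
        then have "ln (real j) \<noteq> 0" using j by simp
        then show ?thesis using False unfolding bb_def psi_def
          by (simp add: of_real_mult[symmetric] del: of_real_mult)
      qed
    qed
    also have "\<dots> = (\<Sum>j\<in>{1..M}. bb j * of_real (psi \<sigma> j)) + a 1"
      using M by (simp add: sum.distrib)
    also have "(\<Sum>j\<in>{1..M}. bb j * of_real (psi \<sigma> j)) =
        (\<Sum>m\<in>{1..M}. (\<Sum>j\<in>{1..m}. bb j) * of_real (psi \<sigma> m - psi \<sigma> (m+1))) + (\<Sum>j\<in>{1..M}. bb j) * of_real (psi \<sigma> (M+1))"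
      by (rule abel_fin)
    also have "(\<lambda>m. \<Sum>j\<in>{1..m}. bb j) = Bp" unfolding Bp_def bb_def using L1 by (intro ext) simp
    finally show ?thesis by (simp add: algebra_simps)
  qed
  have PQ': "(\<lambda>M. a 1 + ((\<Sum>m\<in>{1..M}. Bp m * of_real (psi \<sigma> m - psi \<sigma> (m+1))) + Bp M * of_real (psi \<sigma> (M+1))))
      \<longlonglongrightarrow> a 1 + tot" using PQ by (simp only: add_0_right)
  have "(\<lambda>M. \<Sum>m<M. a (m+1) * of_real (real (m+1) powr (-\<sigma>))) \<longlonglongrightarrow> a 1 + tot"
  proof (rule Lim_transform_eventually[OF PQ'])
    show "eventually (\<lambda>M. a 1 + ((\<Sum>m\<in>{1..M}. Bp m * of_real (psi \<sigma> m - psi \<sigma> (m+1))) + Bp M * of_real (psi \<sigma> (M+1)))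
        = (\<Sum>m<M. a (m+1) * of_real (real (m+1) powr (-\<sigma>)))) sequentially"
      using eqM unfolding eventually_sequentially by (metis (no_types, lifting))
  qed
  then have "(\<lambda>m. a (m+1) * of_real (real (m+1) powr (-\<sigma>))) sums (a 1 + tot)" unfolding sums_def .
  then have "g_fun a \<sigma> = a 1 + tot" unfolding g_fun_def by (rule sums_unique[symmetric])
  with sumsB show ?thesis by blast
qed



definition phiA :: "nat \<Rightarrow> nat \<Rightarrow> real" where
  "phiA n x = real (n div x) / ln (real x)"

definition PhiA :: "nat \<Rightarrow> nat \<Rightarrow> real" where
  "PhiA n k = (\<Sum>d\<in>{1..n}. mobius d * phiA n (d*k))"

lemma phiA_zero: "x > n \<Longrightarrow> phiA n x = 0"
  unfolding phiA_def by simp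

lemma F_t_nat: "F_t t (real n / real k) = (\<Sum>m\<in>{1..n div k}. f_t t m)"
  unfolding F_t_def by (simp add: floor_divide_of_nat_eq)

lemma partA_integral:
  assumes k: "k \<ge> 2"
  shows "((\<lambda>t. F_t t (real n / real k) / real k powr t) has_integral PhiA n k) {0..}"
proof -
  have eq: "F_t t (real n / real k) / real k powr t =
      (\<Sum>d\<in>{1..n}. mobius d * real (n div (d*k)) * real (d*k) powr (-t))" for t
  proof -
    have "F_t t (real n / real k) = (\<Sum>m\<in>{1..n div k}. \<Sum>d | d dvd m. mobius d * real d powr (-t))"
      unfolding F_t_nat f_t_def ..
    also have "\<dots> = (\<Sum>d\<in>{1..n div k}. mobius d * real d powr (-t) * real (n div k div d))"
      by (rule sum_divisors_swap)
    also have "\<dots> = (\<Sum>d\<in>{1..n}. mobius d * real d powr (-t) * real (n div k div d))"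
      by (rule sum_div_extend) simp
    finally have "F_t t (real n / real k) / real k powr t =
        (\<Sum>d\<in>{1..n}. mobius d * real d powr (-t) * real (n div k div d) / real k powr t)"
      by (simp add: sum_divide_distrib)
    also have "\<dots> = (\<Sum>d\<in>{1..n}. mobius d * real (n div (d*k)) * real (d*k) powr (-t))"
    proof (intro sum.cong refl)
      fix d assume "d \<in> {1..n}"
      have "n div k div d = n div (d*k)" by (metis div_mult2_eq mult.commute)
      moreover have "real d powr (-t) / real k powr t = real (d*k) powr (-t)"
        by (simp add: powr_mult powr_minus_divide)
      ultimately show "mobius d * real d powr (-t) * real (n div k div d) / real k powr t =
          mobius d * real (n div (d*k)) * real (d*k) powr (-t)"
        by (metis (no_types, lifting) mult.assoc mult.commute times_divide_eq_right)
    qed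
    finally show ?thesis .
  qed
  have "((\<lambda>t. \<Sum>d\<in>{1..n}. mobius d * real (n div (d*k)) * real (d*k) powr (-t)) has_integral
      (\<Sum>d\<in>{1..n}. mobius d * real (n div (d*k)) * (real (d*k) powr (-0) / ln (real (d*k))))) {0..}"
  proof (rule has_integral_sum)
    fix d assume d: "d \<in> {1..n}"
    have "d * k \<ge> 1 * 2" using d k by (intro mult_le_mono) auto
    then have c1: "real (d*k) > 1" by linarith
    show "((\<lambda>t. mobius d * real (n div (d*k)) * real (d*k) powr (-t)) has_integral
        mobius d * real (n div (d*k)) * (real (d*k) powr (-0) / ln (real (d*k)))) {0..}"
      by (rule has_integral_mult_right[OF powr_neg_has_integral[OF c1]])
  qed simp
  moreover have "(\<Sum>d\<in>{1..n}. mobius d * real (n div (d*k)) * (real (d*k) powr (-0) / ln (real (d*k)))) = PhiA n k"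
    unfolding PhiA_def phiA_def
  proof (intro sum.cong refl)
    fix d assume d: "d \<in> {1..n}"
    have "real (d*k) > 0" using d k by simp
    then show "mobius d * real (n div (d*k)) * (real (d*k) powr (-0) / ln (real (d*k))) =
        mobius d * (real (n div (d*k)) / ln (real (d*k)))" by simp
  qed
  ultimately show ?thesis unfolding eq by simp
qed

lemma PhiA_zero: "k > n \<Longrightarrow> PhiA n k = 0"
  unfolding PhiA_def by (intro sum.neutral ballI) (auto intro!: phiA_zero simp: less_le_trans[of n k])

lemma mobius_one: "mobius 1 = 1"
  unfolding mobius_def by simp

lemma PhiA_n:
  assumes n: "n \<ge> 2"
  shows "PhiA n n = 1 / ln (real n)"
proof -
  have "PhiA n n = mobius 1 * phiA n (1*n) + (\<Sum>d\<in>{2..n}. mobius d * phiA n (d*n))"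
    unfolding PhiA_def using n by (subst sum.atLeast_Suc_atMost) (auto simp: numeral_2_eq_2)
  also have "(\<Sum>d\<in>{2..n}. mobius d * phiA n (d*n)) = 0"
  proof (intro sum.neutral ballI)
    fix d assume "d \<in> {2..n}"
    then have "d * n > n" using n by simp
    then show "mobius d * phiA n (d*n) = 0" by (simp add: phiA_zero)
  qed
  finally show ?thesis using n mobius_one by (simp add: phiA_def)
qed

lemma partA:
  assumes n: "n \<ge> 2"
  shows "(\<Sum>m\<in>{1..n}. a m * of_nat (n div m)) =
     of_nat n * a 1 + (\<Sum>k\<in>{2..n-1}. S_fun a (real k) * of_real (PhiA n k - PhiA n (k+1)))
     + S_fun a (real n) / of_real (ln (real n))"
proof -
  define T where "T = Sigma {1::nat..} (\<lambda>k. Sigma {1::nat..} (\<lambda>d. {..<d}))"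
  define Fa where "Fa = (\<lambda>(k,d,r). of_real (mobius d) * S_fun a (real k) * of_real (phiA n (d*k+r) - phiA n (d*k+r+1)))"
  have fin: "finite {x \<in> T. norm (Fa x) \<noteq> 0}"
  proof (rule finite_subset)
    show "{x \<in> T. norm (Fa x) \<noteq> 0} \<subseteq> {1..n} \<times> {1..n} \<times> {..<n}"
    proof
      fix x assume x: "x \<in> {x \<in> T. norm (Fa x) \<noteq> 0}"
      then obtain k d r where kdr: "x = (k,d,r)" "k \<ge> 1" "d \<ge> 1" "r < d" unfolding T_def by auto
      have "d*k + r \<le> n"
      proof (rule ccontr)
        assume "\<not> d*k + r \<le> n"
        then have "phiA n (d*k+r) = 0" "phiA n (d*k+r+1) = 0" by (auto intro: phiA_zero)
        then show False using x kdr unfolding Fa_def by simp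
      qed
      moreover have "k \<le> d*k" "d \<le> d*k" using kdr by simp_all
      ultimately have "k \<le> n" "d \<le> n" "r < n" using kdr by linarith+
      then show "x \<in> {1..n} \<times> {1..n} \<times> {..<n}" using kdr by auto
    qed
  qed simp
  have abs: "(\<lambda>x. norm (Fa x)) summable_on T"
    by (rule finite_nonzero_values_imp_summable_on[OF fin])
  note R = regroup[OF abs[unfolded Fa_def T_def]]
  obtain tot where R1: "((\<lambda>m. (\<Sum>d\<in>{1..m}. of_real (mobius d) * S_fun a (real (m div d))) * of_real (phiA n m - phiA n (m+1)))
            has_sum tot) {1..}"
    and R2: "((\<lambda>k. \<Sum>\<^sub>\<infinity>d\<in>{1..}. of_real (mobius d) * S_fun a (real k) * of_real (phiA n (d*k) - phiA n (d*k+d)))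
            has_sum tot) {1..}"
    using R(1) R(2) by blast
  define bb where "bb j = a j * of_real (ln (real j))" for j
  define Bp where "Bp m = (\<Sum>d\<in>{1..m}. of_real (mobius d) * S_fun a (real (m div d)))" for m
  have "((\<lambda>m. Bp m * of_real (phiA n m - phiA n (m+1))) has_sum (\<Sum>m\<in>{1..n}. Bp m * of_real (phiA n m - phiA n (m+1)))) {1..}"
    by (rule has_sum_finite_neutralI) (auto simp: phiA_zero)
  then have tot1: "tot = (\<Sum>m\<in>{1..n}. Bp m * of_real (phiA n m - phiA n (m+1)))"
    using R1 unfolding Bp_def using has_sum_unique by blast
  have "(\<Sum>j\<in>{1..n}. bb j * of_real (phiA n j)) =
        (\<Sum>m\<in>{1..n}. (\<Sum>j\<in>{1..m}. bb j) * of_real (phiA n m - phiA n (m+1))) + (\<Sum>j\<in>{1..n}. bb j) * of_real (phiA n (n+1))"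
    by (rule abel_fin)
  also have "(\<lambda>m. \<Sum>j\<in>{1..m}. bb j) = Bp" unfolding Bp_def bb_def using L1 by (intro ext) simp
  finally have tot2: "tot = (\<Sum>j\<in>{1..n}. bb j * of_real (phiA n j))" using tot1 by (simp add: phiA_zero)
  have lhs: "(\<Sum>m\<in>{1..n}. a m * of_nat (n div m)) = of_nat n * a 1 + (\<Sum>j\<in>{1..n}. bb j * of_real (phiA n j))"
  proof -
    have "(\<Sum>m\<in>{1..n}. a m * of_nat (n div m)) = (\<Sum>j\<in>{1..n}. bb j * of_real (phiA n j) + (if j = 1 then of_nat n * a 1 else 0))"
    proof (intro sum.cong refl)
      fix j assume j: "j \<in> {1..n}"
      show "a j * of_nat (n div j) = bb j * of_real (phiA n j) + (if j = 1 then of_nat n * a 1 else 0)"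
      proof (cases "j = 1")
        case True then show ?thesis by (simp add: bb_def phiA_def)
      next
        case False
        then have "ln (real j) \<noteq> 0" using j by simp
        then show ?thesis using False unfolding bb_def phiA_def
          by (simp add: of_real_mult[symmetric] del: of_real_mult)
      qed
    qed
    also have "\<dots> = (\<Sum>j\<in>{1..n}. bb j * of_real (phiA n j)) + of_nat n * a 1"
      using n by (simp add: sum.distrib)
    finally show ?thesis by simp
  qed
  have inner: "(\<Sum>\<^sub>\<infinity>d\<in>{1..}. of_real (mobius d) * S_fun a (real k) * of_real (phiA n (d*k) - phiA n (d*k+d)))
      = S_fun a (real k) * of_real (PhiA n k - PhiA n (k+1))" if k: "k \<in> {1..}" for k
  proof (rule infsumI)
    have "((\<lambda>d. of_real (mobius d) * S_fun a (real k) * of_real (phiA n (d*k) - phiA n (d*k+d))) has_sum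
        (\<Sum>d\<in>{1..n}. of_real (mobius d) * S_fun a (real k) * of_real (phiA n (d*k) - phiA n (d*k+d)))) {1..}"
    proof (rule has_sum_finite_neutralI)
      fix d assume "d \<in> {1..} - {1..n}"
      then have "d > n" by auto
      moreover have "d*k \<ge> d" using k by simp
      ultimately have "d*k > n" "d*k+d > n" by linarith+
      then show "of_real (mobius d) * S_fun a (real k) * of_real (phiA n (d*k) - phiA n (d*k+d)) = 0"
        by (simp add: phiA_zero)
    qed auto
    moreover have "(\<Sum>d\<in>{1..n}. of_real (mobius d) * S_fun a (real k) * of_real (phiA n (d*k) - phiA n (d*k+d)))
        = S_fun a (real k) * of_real (PhiA n k - PhiA n (k+1))"
    proof -
      have "PhiA n k - PhiA n (k+1) = (\<Sum>d\<in>{1..n}. mobius d * (phiA n (d*k) - phiA n (d*k+d)))"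
        unfolding PhiA_def by (simp add: sum_subtractf right_diff_distrib algebra_simps)
      moreover have "(\<Sum>d\<in>{1..n}. of_real (mobius d) * S_fun a (real k) * of_real (phiA n (d*k) - phiA n (d*k+d)))
          = S_fun a (real k) * of_real (\<Sum>d\<in>{1..n}. mobius d * (phiA n (d*k) - phiA n (d*k+d)))"
        unfolding of_real_sum sum_distrib_left by (intro sum.cong refl) (simp add: mult_ac del: of_real_diff)
      ultimately show ?thesis by simp
    qed
    ultimately show "((\<lambda>d. of_real (mobius d) * S_fun a (real k) * of_real (phiA n (d*k) - phiA n (d*k+d))) has_sum
        S_fun a (real k) * of_real (PhiA n k - PhiA n (k+1))) {1..}" by simp
  qed
  have "((\<lambda>k. S_fun a (real k) * of_real (PhiA n k - PhiA n (k+1))) has_sum tot) {1..}"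
    using R2 inner by (subst has_sum_cong[of "{1..}" _ "\<lambda>k. \<Sum>\<^sub>\<infinity>d\<in>{1..}. of_real (mobius d) * S_fun a (real k) * of_real (phiA n (d*k) - phiA n (d*k+d))"]) auto
  moreover have "((\<lambda>k. S_fun a (real k) * of_real (PhiA n k - PhiA n (k+1))) has_sum
      (\<Sum>k\<in>{1..n}. S_fun a (real k) * of_real (PhiA n k - PhiA n (k+1)))) {1..}"
    by (rule has_sum_finite_neutralI) (auto simp: PhiA_zero)
  ultimately have tot3: "tot = (\<Sum>k\<in>{1..n}. S_fun a (real k) * of_real (PhiA n k - PhiA n (k+1)))"
    using has_sum_unique by blast
  have split: "(\<Sum>k\<in>{1..n}. S_fun a (real k) * of_real (PhiA n k - PhiA n (k+1))) =
      S_fun a (real 1) * of_real (PhiA n 1 - PhiA n (1+1))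
      + (\<Sum>k\<in>{2..n-1}. S_fun a (real k) * of_real (PhiA n k - PhiA n (k+1)))
      + S_fun a (real n) * of_real (PhiA n n - PhiA n (n+1))"
  proof -
    have "{1..n} = insert 1 (insert n {2..n-1})" using n by auto
    moreover have "1 \<notin> insert n {2..n-1}" "n \<notin> {2..n-1}" using n by auto
    ultimately show ?thesis by (simp add: algebra_simps)
  qed
  have "tot = (\<Sum>k\<in>{2..n-1}. S_fun a (real k) * of_real (PhiA n k - PhiA n (k+1)))
      + S_fun a (real n) / of_real (ln (real n))"
    unfolding tot3 split using S_one[of a] PhiA_n[OF n] PhiA_zero[of n "n+1"] by (simp add: divide_inverse)
  then show ?thesis using lhs tot2 by simp
qed



theorem lemma3:
  fixes a :: "nat \<Rightarrow> complex" and n :: nat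
  assumes hS: "\<And>v. v > 1 \<Longrightarrow> (\<lambda>k. norm (S_fun a (real k)) / real k powr v) \<longlonglongrightarrow> 0"
    and hn: "n \<ge> 2"
  shows "(\<Sum>m\<in>{1..n}. a m * of_nat (n div m))
           - of_nat n * g_fun a (1 + 1 / ln (real n))
           - S_fun a (real n) / of_real (ln (real n))
         = (\<Sum>k\<in>{2..n - 1}. S_fun a (real k) *
              of_real (integral {0..} (\<lambda>t. F_t t (real n / real k) / real k powr t
                                         - F_t t (real n / real (k + 1)) / real (k + 1) powr t)))
           - of_nat n * (\<Sum>j. S_fun a (real (j + 2)) *
              of_real (integral {1 + 1 / ln (real n)..}
                 (\<lambda>u. (1 / real (j + 2) powr u - 1 / real (j + 3) powr u) / zeta_real u)))"
proof -
  have ln: "ln (real n) > 0" using hn by simp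
  have s: "1 + 1 / ln (real n) > 1" using ln by simp
  obtain tot where sm: "(\<lambda>j. S_fun a (real (j + 2)) *
              of_real (integral {1 + 1 / ln (real n)..} (\<lambda>u. (1 / real (j + 2) powr u - 1 / real (j + 3) powr u) / zeta_real u)))
            sums tot" and g: "g_fun a (1 + 1 / ln (real n)) = a 1 + tot"
    using partB[OF hS s] by blast
  have IA: "integral {0..} (\<lambda>t. F_t t (real n / real k) / real k powr t
                                - F_t t (real n / real (k + 1)) / real (k + 1) powr t) = PhiA n k - PhiA n (k+1)"
    if k: "k \<in> {2..n-1}" for k
    using k by (intro integral_unique has_integral_diff partA_integral) auto
  have sumA: "(\<Sum>k\<in>{2..n - 1}. S_fun a (real k) *
              of_real (integral {0..} (\<lambda>t. F_t t (real n / real k) / real k powr t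
                                         - F_t t (real n / real (k + 1)) / real (k + 1) powr t)))
      = (\<Sum>k\<in>{2..n-1}. S_fun a (real k) * of_real (PhiA n k - PhiA n (k+1)))"
    by (intro sum.cong refl) (simp only: IA)
  show ?thesis
    unfolding sumA sums_unique[OF sm, symmetric] g partA[OF hn]
    by (simp add: algebra_simps)
qed


end
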